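(* Let $f:\mathcal X\times\mathcal Y\to\mathcal Z\cup\{*\}$ be a (possibly partial) function and let Alice's input $X$ and Bob's input $Y$ be independent random variables on $\mathcal X$ and $\mathcal Y$. Suppose a one-way protocol (Alice sends message $M$ depending on $X$, Bob outputs a value depending on $M$ and $Y$) computes $f$ with error probability at most $\epsilon$. Fix any symmetric relation on $\mathcal X$ called incompatibility, and suppose that (i) for every incompatible pair $x,x'$, $\Pr_Y[Y\text{ distinguishes }x,x']\ge\alpha>0$, and (ii) for every $x\in\mathcal X$ the number of $x'$ compatible with $x$ (including $x$ itself) is at most $N_{\max}$. Then $$I(X;M)\ge H(X)-\log N_{\max}-1-\frac{2\epsilon}{\alpha}\left(\log|\mathcal X|-\log N_{\max}\right).$$
   Context: $y$ distinguishes $x,x'$ if $f(x,y)$ and $f(x',y)$ are both defined (not $*$) and $f(x,y)\neq f(x',y)$. The protocol errs on $(x,y)$ if $f(x,y)$ is defined and Bob's output differs from it. Two inputs are compatible if they are not incompatible. $\mathcal X$ is finite; logs and information are base 2. *)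

theory Defs
  imports "HOL-Probability.Probability_Mass_Function"
begin

(* Shannon entropy (base 2) of a distribution on a finite type; 0 log 0 = 0 since ln 0 = 0 *)
definition entropy2 :: "'a::finite pmf \<Rightarrow> real" where
  "entropy2 p = - (\<Sum>a\<in>UNIV. pmf p a * log 2 (pmf p a))"

definition mutual_info2 :: "('a::finite \<times> 'b::finite) pmf \<Rightarrow> real" where
  "mutual_info2 p = (\<Sum>a\<in>UNIV. \<Sum>b\<in>UNIV.
      pmf p (a, b) * log 2 (pmf p (a, b) / (pmf (map_pmf fst p) a * pmf (map_pmf snd p) b)))"

(* y distinguishes two inputs: both values defined (None encodes the undefined value) and different *)
definition distinguishes :: "('x \<Rightarrow> 'y \<Rightarrow> 'z option) \<Rightarrow> 'y \<Rightarrow> 'x \<Rightarrow> 'x \<Rightarrow> bool" where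
  "distinguishes f y x x' \<longleftrightarrow> f x y \<noteq> None \<and> f x' y \<noteq> None \<and> f x y \<noteq> f x' y"

definition input_msg :: "'x pmf \<Rightarrow> ('x \<Rightarrow> 'm pmf) \<Rightarrow> ('x \<times> 'm) pmf" where
  "input_msg pX enc = bind_pmf pX (\<lambda>x. map_pmf (\<lambda>m. (x, m)) (enc x))"

(* Full run of the one-way protocol: X ~ pX, Y ~ pY independent, M ~ enc X,
   Bob's output Z ~ dec M Y (private randomness allowed) *)
definition protocol_run ::
  "'x pmf \<Rightarrow> 'y pmf \<Rightarrow> ('x \<Rightarrow> 'm pmf) \<Rightarrow> ('m \<Rightarrow> 'y \<Rightarrow> 'z pmf) \<Rightarrow> ('x \<times> 'y \<times> 'm \<times> 'z) pmf" where
  "protocol_run pX pY enc dec =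
     bind_pmf (pair_pmf pX pY) (\<lambda>(x, y). bind_pmf (enc x) (\<lambda>m.
       map_pmf (\<lambda>z. (x, y, m, z)) (dec m y)))"

definition error_prob ::
  "('x \<Rightarrow> 'y \<Rightarrow> 'z option) \<Rightarrow> 'x pmf \<Rightarrow> 'y pmf \<Rightarrow> ('x \<Rightarrow> 'm pmf) \<Rightarrow> ('m \<Rightarrow> 'y \<Rightarrow> 'z pmf) \<Rightarrow> real" where
  "error_prob f pX pY enc dec =
     measure_pmf.prob (protocol_run pX pY enc dec)
       {(x, y, m, z). f x y \<noteq> None \<and> f x y \<noteq> Some z}"

end

theory Submission
  imports Defs
begin
lemma integral_bind_pmf':
  fixes f :: "'b \<Rightarrow> real"
  assumes "\<And>x. \<bar>f x\<bar> \<le> B"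
  shows "(LINT x|bind_pmf M N. f x) = (LINT a|M. LINT x|N a. f x)"
  unfolding measure_pmf_bind
  apply (rule integral_bind[where K="count_space UNIV" and B=B and B'=1])
  using assms by (auto simp: measure_pmf.emeasure_space_1 measure_pmf_in_subprob_algebra)

lemma bind_return_map: "bind_pmf M (\<lambda>y. return_pmf (g y)) = map_pmf g M"
  by (simp add: map_pmf_def)

lemma prob_integral: "measure_pmf.prob M A = (LINT x|M. indicator A x)"
  by simp

lemma integrable_bounded01: "(\<And>x. 0 \<le> g x \<and> g x \<le> 1) \<Longrightarrow> integrable (measure_pmf M) (g::_\<Rightarrow>real)"
  by (rule measure_pmf.integrable_const_bound[where B=1]) auto

lemma err_formula:
  fixes f :: "'x::finite \<Rightarrow> 'y \<Rightarrow> 'z option"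
    and pX :: "'x pmf" and pY :: "'y pmf"
    and enc :: "'x \<Rightarrow> 'm::finite pmf" and dec :: "'m \<Rightarrow> 'y \<Rightarrow> 'z pmf"
  shows "error_prob f pX pY enc dec = (\<Sum>x\<in>UNIV. \<Sum>m\<in>UNIV. pmf pX x * pmf (enc x) m *
     (LINT y|pY. measure_pmf.prob (dec m y) {z. f x y \<noteq> None \<and> f x y \<noteq> Some z}))"
proof -
  define E :: "('x \<times> 'y \<times> 'm \<times> 'z) set" where "E = {(x, y, m, z). f x y \<noteq> None \<and> f x y \<noteq> Some z}"
  define g where "g x y m = measure_pmf.prob (dec m y) {z. f x y \<noteq> None \<and> f x y \<noteq> Some z}" for x y m
  have g01: "0 \<le> g x y m \<and> g x y m \<le> 1" for x y m unfolding g_def by auto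
  have s01: "0 \<le> (\<Sum>m\<in>UNIV. pmf (enc x) m * g x y m) \<and> (\<Sum>m\<in>UNIV. pmf (enc x) m * g x y m) \<le> 1" for x y
  proof
    show "0 \<le> (\<Sum>m\<in>UNIV. pmf (enc x) m * g x y m)" using g01 by (simp add: sum_nonneg)
    have "(\<Sum>m\<in>UNIV. pmf (enc x) m * g x y m) \<le> (\<Sum>m\<in>UNIV. pmf (enc x) m)"
      using g01 by (intro sum_mono) (simp add: mult_left_le)
    also have "\<dots> = 1" by (rule sum_pmf_eq_1) auto
    finally show "(\<Sum>m\<in>UNIV. pmf (enc x) m * g x y m) \<le> 1" .
  qed
  have inner: "(LINT t|bind_pmf (enc x) (\<lambda>m. map_pmf (\<lambda>z. (x, y, m, z)) (dec m y)). (indicator E t :: real))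
      = (\<Sum>m\<in>UNIV. pmf (enc x) m * g x y m)" for x y
  proof -
    have "(LINT t|bind_pmf (enc x) (\<lambda>m. map_pmf (\<lambda>z. (x, y, m, z)) (dec m y)). (indicator E t :: real))
       = (LINT m|enc x. LINT t|map_pmf (\<lambda>z. (x, y, m, z)) (dec m y). (indicator E t :: real))"
      by (rule integral_bind_pmf'[where B=1]) (auto simp: indicator_def)
    also have "\<dots> = (LINT m|enc x. g x y m)"
    proof (intro Bochner_Integration.integral_cong refl)
      fix m
      show "(LINT t|map_pmf (\<lambda>z. (x, y, m, z)) (dec m y). (indicator E t :: real)) = g x y m"
        unfolding g_def by (simp add: E_def vimage_def)
    qed
    also have "\<dots> = (\<Sum>m\<in>UNIV. g x y m * pmf (enc x) m)"
      by (rule integral_measure_pmf_real) auto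
    finally show ?thesis by (simp add: mult.commute)
  qed
  have "error_prob f pX pY enc dec = (LINT t|protocol_run pX pY enc dec. (indicator E t :: real))"
    unfolding error_prob_def E_def prob_integral ..
  also have "\<dots> = (LINT xy|pair_pmf pX pY. (\<Sum>m\<in>UNIV. pmf (enc (fst xy)) m * g (fst xy) (snd xy) m))"
    unfolding protocol_run_def
    apply (subst integral_bind_pmf'[where B=1])
     apply (simp add: indicator_def)
    apply (rule Bochner_Integration.integral_cong[OF refl])
    using inner by (auto simp del: integral_indicator)
  also have "\<dots> = (LINT x|pX. LINT y|pY. (\<Sum>m\<in>UNIV. pmf (enc x) m * g x y m))"
    unfolding pair_pmf_def
    apply (subst integral_bind_pmf'[where B=1])
    subgoal for xy using s01[of "fst xy" "snd xy"] by (auto simp: abs_le_iff)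
    apply (simp add: bind_return_map)
    done
  also have "\<dots> = (LINT x|pX. (\<Sum>m\<in>UNIV. pmf (enc x) m * (LINT y|pY. g x y m)))"
    apply (rule Bochner_Integration.integral_cong[OF refl])
    apply (subst Bochner_Integration.integral_sum)
    using g01 by (auto intro!: integrable_bounded01)
  also have "\<dots> = (\<Sum>x\<in>UNIV. (\<Sum>m\<in>UNIV. pmf (enc x) m * (LINT y|pY. g x y m)) * pmf pX x)"
    by (rule integral_measure_pmf_real) auto
  finally show ?thesis
    by (simp add: g_def sum_distrib_left mult.commute mult.left_commute mult.assoc)
qed
lemma e_pair:
  fixes pY :: "'y pmf" and dec :: "'m \<Rightarrow> 'y \<Rightarrow> 'z pmf" and f :: "'x \<Rightarrow> 'y \<Rightarrow> 'z option"
  defines "e \<equiv> \<lambda>x m. (LINT y|pY. measure_pmf.prob (dec m y) {z. f x y \<noteq> None \<and> f x y \<noteq> Some z})"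
  shows "measure_pmf.prob pY {y. distinguishes f y x x'} \<le> e x m + e x' m"
proof -
  define g where "g x y = measure_pmf.prob (dec m y) {z. f x y \<noteq> None \<and> f x y \<noteq> Some z}" for x y
  have g01: "0 \<le> g x y \<and> g x y \<le> 1" for x y unfolding g_def by auto
  have pt: "indicator {y. distinguishes f y x x'} y \<le> g x y + g x' y" for y
  proof (cases "distinguishes f y x x'")
    case True
    then obtain a b where ab: "f x y = Some a" "f x' y = Some b" "a \<noteq> b"
      unfolding distinguishes_def by auto
    have "1 = measure_pmf.prob (dec m y) ({z. f x y \<noteq> None \<and> f x y \<noteq> Some z} \<union> {z. f x' y \<noteq> None \<and> f x' y \<noteq> Some z})"
    proof -
      have "{z. f x y \<noteq> None \<and> f x y \<noteq> Some z} \<union> {z. f x' y \<noteq> None \<and> f x' y \<noteq> Some z} = UNIV"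
        using ab by auto
      then show ?thesis by simp
    qed
    also have "\<dots> \<le> g x y + g x' y" unfolding g_def
      by (rule measure_Un_le) auto
    finally show ?thesis using True by simp
  next
    case False then show ?thesis using g01[of x y] g01[of x' y] by simp
  qed
  have "measure_pmf.prob pY {y. distinguishes f y x x'} = (LINT y|pY. indicator {y. distinguishes f y x x'} y)"
    by simp
  also have "\<dots> \<le> (LINT y|pY. g x y + g x' y)"
  proof (rule integral_mono)
    show "integrable (measure_pmf pY) (\<lambda>y. indicator {y. distinguishes f y x x'} y :: real)"
      by (rule integrable_bounded01) (simp add: indicator_def)
    show "integrable (measure_pmf pY) (\<lambda>y. g x y + g x' y)"
      by (intro Bochner_Integration.integrable_add integrable_bounded01 g01)
  qed (rule pt)
  also have "\<dots> = e x m + e x' m"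
    unfolding e_def g_def
    by (rule Bochner_Integration.integral_add; rule integrable_bounded01) auto
  finally show ?thesis .
qed

lemma pmf_input_msg:
  fixes pX :: "'x::finite pmf"
  shows "pmf (input_msg pX enc) (x, m) = pmf pX x * pmf (enc x) m"
proof -
  have "pmf (map_pmf (\<lambda>m. (x', m)) (enc x')) (x, m) = (if x' = x then pmf (enc x) m else 0)" for x'
  proof (cases "x' = x")
    case True
    have "inj (\<lambda>m. (x, m))" by (auto simp: inj_def)
    then show ?thesis using True pmf_map_inj'[of "\<lambda>m. (x, m)" "enc x" m] by simp
  next
    case False
    then show ?thesis by (auto simp: pmf_eq_0_set_pmf)
  qed
  then have "pmf (input_msg pX enc) (x, m) = (LINT x'|pX. (if x' = x then pmf (enc x) m else 0))"
    unfolding input_msg_def pmf_bind by simp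
  also have "\<dots> = (\<Sum>x'\<in>UNIV. (if x' = x then pmf (enc x) m else 0) * pmf pX x')"
    by (rule integral_measure_pmf_real) auto
  also have "\<dots> = pmf pX x * pmf (enc x) m"
  proof -
    have "(\<Sum>x'\<in>UNIV. (if x' = x then pmf (enc x) m else 0) * pmf pX x') = (\<Sum>x'\<in>UNIV. if x' = x then pmf (enc x) m * pmf pX x else 0)"
      by (rule sum.cong) auto
    then show ?thesis by simp
  qed
  finally show ?thesis .
qed

lemma fst_input_msg: "map_pmf fst (input_msg pX enc) = pX"
  unfolding input_msg_def map_bind_pmf map_pmf_comp
  by (simp add: map_pmf_const bind_return_pmf')

lemma pointwise:
  fixes P pp r w :: real
  assumes "P \<ge> 0" "pp \<ge> 0" "r \<ge> 0" "w > 0" "P > 0 \<Longrightarrow> pp > 0 \<and> r > 0"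
  shows "P * log 2 (P / (pp * r)) \<ge> - P * log 2 pp + P * log 2 w + (P - r * w) / ln 2"
proof (cases "P = 0")
  case True
  then show ?thesis using assms by (simp add: divide_nonneg_pos)
next
  case False
  then have P: "P > 0" using assms by simp
  with assms have pp: "pp > 0" and r: "r > 0" by auto
  define y where "y = r * w / P"
  have y: "y > 0" using P r assms by (simp add: y_def)
  have "ln y \<le> y - 1" by (rule ln_le_minus_one[OF y])
  then have "P * ln y \<le> P * (y - 1)" using P by simp
  also have "\<dots> = r * w - P" using P by (simp add: y_def field_simps)
  finally have A: "P * ln y \<le> r * w - P" .
  have "log 2 (P / (pp * r)) = - log 2 pp + log 2 w - ln y / ln 2"
    using P pp r assms(4) by (simp add: y_def log_def ln_div ln_mult field_simps)
  then have "P * log 2 (P / (pp * r)) = P * (- log 2 pp + log 2 w - ln y / ln 2)"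
    by simp
  also have "\<dots> = - P * log 2 pp + P * log 2 w - P * ln y / ln 2"
    by (simp add: algebra_simps)
  finally have "P * log 2 (P / (pp * r)) = - P * log 2 pp + P * log 2 w - P * ln y / ln 2" .
  moreover have "P * ln y / ln 2 \<le> (r * w - P) / ln 2"
    using A by (simp add: divide_right_mono)
  ultimately show ?thesis by (simp add: diff_divide_distrib)
qed

theorem lemmaE2:
  fixes f :: "'x::finite \<Rightarrow> 'y \<Rightarrow> 'z option"
    and pX :: "'x pmf" and pY :: "'y pmf"
    and enc :: "'x \<Rightarrow> 'm::finite pmf" and dec :: "'m \<Rightarrow> 'y \<Rightarrow> 'z pmf"
    and incompat :: "'x \<Rightarrow> 'x \<Rightarrow> bool"
    and \<epsilon> \<alpha> :: real and Nmax :: nat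
  assumes err: "error_prob f pX pY enc dec \<le> \<epsilon>"
    and sym: "\<And>x x'. incompat x x' \<Longrightarrow> incompat x' x"
    and alpha_pos: "\<alpha> > 0"
    and dist: "\<And>x x'. incompat x x' \<Longrightarrow> measure_pmf.prob pY {y. distinguishes f y x x'} \<ge> \<alpha>"
    and compat_bound: "\<And>x. card {x'. \<not> incompat x x'} \<le> Nmax"
    and Nmax_le: "Nmax \<le> CARD('x)"
  shows "mutual_info2 (input_msg pX enc) \<ge>
           entropy2 pX - log 2 Nmax - 1
             - (2 * \<epsilon> / \<alpha>) * (log 2 (CARD('x)) - log 2 Nmax)"
proof -
  define J where "J = input_msg pX enc"
  define e where "e x m = (LINT y|pY. measure_pmf.prob (dec m y) {z. f x y \<noteq> None \<and> f x y \<noteq> Some z})" for x m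
  define r where "r m = pmf (map_pmf snd J) m" for m
  define K where "K = real CARD('x)"
  define N where "N = real Nmax"
  define G where "G x m \<longleftrightarrow> e x m < \<alpha> / 2" for x m
  define w where "w x m = (if G x m then 1 / (2 * N) else 1 / (2 * K))" for x m
  define P where "P x m = pmf pX x * pmf (enc x) m" for x m
  define D where "D = log 2 K - log 2 N"
  have e_nonneg: "e x m \<ge> 0" for x m unfolding e_def by (rule integral_nonneg_AE) auto
  have epair: "\<alpha> \<le> e x m + e x' m" if "incompat x x'" for x x' m
    using dist[OF that] e_pair[of pY f x x' dec m] unfolding e_def by linarith
  have self: "\<not> incompat x x" for x
  proof
    assume "incompat x x"
    from dist[OF this] alpha_pos show False by (simp add: distinguishes_def)
  qed
  have N1: "N \<ge> 1"
  proof -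
    have "1 \<le> card {x'. \<not> incompat undefined x'}"
      using self[of undefined] by (metis (mono_tags) One_nat_def card_0_eq empty_iff finite mem_Collect_eq not_less_eq_eq le_zero_eq)
    then show ?thesis using compat_bound[of undefined] by (simp add: N_def)
  qed
  have NK: "N \<le> K" using Nmax_le by (simp add: N_def K_def)
  have K1: "K \<ge> 1" using N1 NK by simp
  have D_nonneg: "D \<ge> 0" using N1 NK by (simp add: D_def)
  have cardG: "card {x. G x m} \<le> Nmax" for m
  proof (cases "\<exists>x0. G x0 m")
    case True
    then obtain x0 where x0: "G x0 m" by blast
    have "{x. G x m} \<subseteq> {x'. \<not> incompat x0 x'}"
    proof
      fix x assume "x \<in> {x. G x m}"
      then have "G x m" by simp
      show "x \<in> {x'. \<not> incompat x0 x'}"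
      proof (rule ccontr)
        assume "x \<notin> {x'. \<not> incompat x0 x'}"
        then have "incompat x0 x" by simp
        from epair[OF this, of m] x0 \<open>G x m\<close> show False by (simp add: G_def)
      qed
    qed
    then have "card {x. G x m} \<le> card {x'. \<not> incompat x0 x'}" by (intro card_mono) auto
    then show ?thesis using compat_bound[of x0] by linarith
  next
    case False then show ?thesis by simp
  qed
  have wsum: "(\<Sum>x\<in>UNIV. w x m) \<le> 1" for m
  proof -
    have "(\<Sum>x\<in>UNIV. w x m) = (\<Sum>x\<in>UNIV \<inter> {x. G x m}. 1 / (2 * N)) + (\<Sum>x\<in>UNIV \<inter> - {x. G x m}. 1 / (2 * K))"
      unfolding w_def by (rule sum.If_cases) simp
    also have "\<dots> = real (card {x. G x m}) / (2 * N) + real (card (- {x. G x m})) / (2 * K)"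
      by simp
    also have "\<dots> \<le> 1 / 2 + 1 / 2"
    proof (rule add_mono)
      show "real (card {x. G x m}) / (2 * N) \<le> 1 / 2"
        using cardG[of m] N1 by (simp add: N_def field_simps)
      have "card (- {x. G x m}) \<le> CARD('x)" by (rule card_mono) auto
      then show "real (card (- {x. G x m})) / (2 * K) \<le> 1 / 2"
        using K1 by (simp add: K_def field_simps)
    qed
    finally show ?thesis by simp
  qed
  have wpos: "w x m > 0" for x m using N1 K1 by (simp add: w_def)
  have logw: "log 2 (w x m) = - ((1 + log 2 N) + (if G x m then 0 else D))" for x m
  proof -
    have l: "log 2 (1 / (2 * t)) = - (1 + log 2 t)" if "t \<ge> 1" for t :: real
      using that by (simp add: log_divide log_mult)
    show ?thesis using l[OF N1] l[OF K1] by (simp add: w_def D_def)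
  qed
  have PJ: "pmf J (x, m) = P x m" for x m unfolding J_def P_def by (rule pmf_input_msg)
  have fstJ: "map_pmf fst J = pX" unfolding J_def by (rule fst_input_msg)
  have rsum: "(\<Sum>m\<in>UNIV. r m) = 1" unfolding r_def by (rule sum_pmf_eq_1) auto
  have rnn: "r m \<ge> 0" for m unfolding r_def by simp
  have rpos: "r m > 0" if "P x m > 0" for x m
  proof -
    have "(x, m) \<in> set_pmf J" using that PJ[of x m] by (simp add: set_pmf_iff)
    then have "m \<in> set_pmf (map_pmf snd J)" by force
    then show ?thesis unfolding r_def by (simp add: pmf_positive)
  qed
  have qsum: "(\<Sum>m\<in>UNIV. pmf (enc x) m) = 1" for x by (rule sum_pmf_eq_1) auto
  have psum: "(\<Sum>x\<in>UNIV. pmf pX x) = 1" by (rule sum_pmf_eq_1) auto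
  have Psum: "(\<Sum>x\<in>UNIV. \<Sum>m\<in>UNIV. P x m) = 1"
    by (simp add: P_def sum_distrib_left[symmetric] qsum psum)
  have MI: "mutual_info2 J = (\<Sum>x\<in>UNIV. \<Sum>m\<in>UNIV. P x m * log 2 (P x m / (pmf pX x * r m)))"
    unfolding mutual_info2_def fstJ r_def PJ ..
  have step0: "mutual_info2 J \<ge> (\<Sum>x\<in>UNIV. \<Sum>m\<in>UNIV. - P x m * log 2 (pmf pX x) + P x m * log 2 (w x m) + (P x m - r m * w x m) / ln 2)"
    unfolding MI
  proof (intro sum_mono)
    fix x m
    show "- P x m * log 2 (pmf pX x) + P x m * log 2 (w x m) + (P x m - r m * w x m) / ln 2
          \<le> P x m * log 2 (P x m / (pmf pX x * r m))"
    proof (rule pointwise)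
      show "P x m \<ge> 0" by (simp add: P_def)
      show "pmf pX x \<ge> 0" by simp
      show "r m \<ge> 0" by (rule rnn)
      show "w x m > 0" by (rule wpos)
      assume "P x m > 0"
      then show "pmf pX x > 0 \<and> r m > 0" using rpos[of x m]
        by (simp add: P_def zero_less_mult_iff)
    qed
  qed
  have split: "(\<Sum>x\<in>UNIV. \<Sum>m\<in>UNIV. - P x m * log 2 (pmf pX x) + P x m * log 2 (w x m) + (P x m - r m * w x m) / ln 2) = (\<Sum>x\<in>UNIV. \<Sum>m\<in>UNIV. - P x m * log 2 (pmf pX x))
      + (\<Sum>x\<in>UNIV. \<Sum>m\<in>UNIV. P x m * log 2 (w x m))
      + (\<Sum>x\<in>UNIV. \<Sum>m\<in>UNIV. (P x m - r m * w x m) / ln 2)"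
    by (simp only: sum.distrib)
  note step1 = step0[unfolded split]
  have A: "(\<Sum>x\<in>UNIV. \<Sum>m\<in>UNIV. - P x m * log 2 (pmf pX x)) = entropy2 pX"
  proof -
    have "(\<Sum>m\<in>UNIV. - P x m * log 2 (pmf pX x)) = - pmf pX x * log 2 (pmf pX x)" for x
    proof -
      have "(\<Sum>m\<in>UNIV. - P x m * log 2 (pmf pX x)) = (- pmf pX x * log 2 (pmf pX x)) * (\<Sum>m\<in>UNIV. pmf (enc x) m)"
      proof -
        have "(\<Sum>m\<in>UNIV. - P x m * log 2 (pmf pX x)) = (\<Sum>m\<in>UNIV. pmf (enc x) m * (- pmf pX x * log 2 (pmf pX x)))"
          by (rule sum.cong) (simp_all add: P_def)
        also have "\<dots> = (\<Sum>m\<in>UNIV. pmf (enc x) m) * (- pmf pX x * log 2 (pmf pX x))"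
          by (rule sum_distrib_right[symmetric])
        finally show ?thesis by simp
      qed
      then show ?thesis using qsum[of x] by simp
    qed
    then show ?thesis by (simp add: entropy2_def sum_negf)
  qed
  have C: "(\<Sum>x\<in>UNIV. \<Sum>m\<in>UNIV. (P x m - r m * w x m) / ln 2) \<ge> 0"
  proof -
    have "(\<Sum>x\<in>UNIV. \<Sum>m\<in>UNIV. r m * w x m) = (\<Sum>m\<in>UNIV. r m * (\<Sum>x\<in>UNIV. w x m))"
      by (subst sum.swap) (simp add: sum_distrib_left)
    also have "\<dots> \<le> (\<Sum>m\<in>UNIV. r m * 1)"
      by (intro sum_mono mult_left_mono wsum rnn)
    finally have "(\<Sum>x\<in>UNIV. \<Sum>m\<in>UNIV. r m * w x m) \<le> 1" using rsum by simp
    then have "0 \<le> (\<Sum>x\<in>UNIV. \<Sum>m\<in>UNIV. P x m - r m * w x m)"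
      using Psum by (simp add: sum_subtractf)
    also have "\<dots> = ln 2 * (\<Sum>x\<in>UNIV. \<Sum>m\<in>UNIV. (P x m - r m * w x m) / ln 2)"
      by (simp add: sum_distrib_left)
    finally show ?thesis by (simp add: zero_le_mult_iff)
  qed
  have errsum: "(\<Sum>x\<in>UNIV. \<Sum>m\<in>UNIV. P x m * e x m) \<le> \<epsilon>"
    using err err_formula[of f pX pY enc dec] by (simp add: P_def e_def)
  have B: "(\<Sum>x\<in>UNIV. \<Sum>m\<in>UNIV. P x m * log 2 (w x m)) \<ge> - (1 + log 2 N) - D * (2 * \<epsilon> / \<alpha>)"
  proof -
    have pt: "P x m * ((1 + log 2 N) + (if G x m then 0 else D)) \<le> P x m * (1 + log 2 N) + (D * (2 / \<alpha>)) * (P x m * e x m)" for x m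
    proof -
      have "(if G x m then 0 else D) \<le> D * (2 / \<alpha>) * e x m"
        using D_nonneg alpha_pos e_nonneg[of x m]
        by (auto simp: G_def field_simps intro!: mult_left_mono)
      then have h2: "P x m * (if G x m then 0 else D) \<le> P x m * (D * (2 / \<alpha>) * e x m)"
        by (rule mult_left_mono) (simp add: P_def)
      have eq: "P x m * (D * (2 / \<alpha>) * e x m) = D * (2 / \<alpha>) * (P x m * e x m)" by (simp add: algebra_simps)
      have eq2: "P x m * ((1 + log 2 N) + (if G x m then 0 else D)) = P x m * (1 + log 2 N) + P x m * (if G x m then 0 else D)"
        by (simp add: distrib_left)
      show ?thesis using h2 eq eq2 by linarith
    qed
    have "(\<Sum>x\<in>UNIV. \<Sum>m\<in>UNIV. P x m * ((1 + log 2 N) + (if G x m then 0 else D)))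
       \<le> (\<Sum>x\<in>UNIV. \<Sum>m\<in>UNIV. P x m * (1 + log 2 N) + (D * (2 / \<alpha>)) * (P x m * e x m))"
      by (intro sum_mono pt)
    also have "\<dots> = (1 + log 2 N) * (\<Sum>x\<in>UNIV. \<Sum>m\<in>UNIV. P x m) + (D * (2 / \<alpha>)) * (\<Sum>x\<in>UNIV. \<Sum>m\<in>UNIV. P x m * e x m)"
      by (simp add: sum.distrib sum_distrib_left sum_distrib_right mult.commute)
    also have "\<dots> \<le> (1 + log 2 N) + (D * (2 / \<alpha>)) * \<epsilon>"
    proof -
      have "(D * (2 / \<alpha>)) * (\<Sum>x\<in>UNIV. \<Sum>m\<in>UNIV. P x m * e x m) \<le> (D * (2 / \<alpha>)) * \<epsilon>"
        using errsum D_nonneg alpha_pos by (intro mult_left_mono) auto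
      then show ?thesis using Psum by simp
    qed
    moreover have "(\<Sum>x\<in>UNIV. \<Sum>m\<in>UNIV. P x m * log 2 (w x m)) = - (\<Sum>x\<in>UNIV. \<Sum>m\<in>UNIV. P x m * ((1 + log 2 N) + (if G x m then 0 else D)))"
      unfolding logw by (simp only: mult_minus_right sum_negf)
    ultimately show ?thesis by (simp add: algebra_simps)
  qed
  show ?thesis
    using step1 A B C unfolding J_def[symmetric] N_def[symmetric] K_def[symmetric] D_def[symmetric]
    by (simp add: D_def algebra_simps)
qed

end
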